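(* Suppose $\partial\overline{\mathcal{G}}$ is not a set of isolated points, i.e. some point of $\partial\overline{\mathcal{G}}$ is a limit point of $\partial\overline{\mathcal{G}}$. Then there is a continuous function $F:\partial\overline{\mathcal{G}}\to\mathbb{R}$ such that no harmonic function $g$ on $\overline{\mathcal{G}}$ with $g=F$ on $\partial\overline{\mathcal{G}}$ belongs to $\mathbb{H}_1$.
   Context: $\mathcal{G}$ is a connected, locally finite metric graph with countable vertex set and countable edge set. Each edge has a positive length and is identified with an interval. $\mathcal{G}$ carries the geodesic distance $d$, and $\overline{\mathcal{G}}$ is its metric completion. A designated set of vertices, containing all vertices of degree $1$, forms the boundary vertices. $\mathcal{G}_{int}$ is $\mathcal{G}$ minus the boundary vertices, and $\partial\overline{\mathcal{G}}=\overline{\mathcal{G}}\setminus\mathcal{G}_{int}$. Standing assumptions: $\overline{\mathcal{G}}$ is compact and $\partial\overline{\mathcal{G}}$ is totally disconnected. A function $f:\overline{\mathcal{G}}\to\mathbb{R}$ is harmonic if it is continuous, linear on each edge, and satisfies $\sum_{e\sim v}\partial_\nu f_e(v)=0$ at every interior vertex $v$, where $\partial_\nu f_e(v)$ is the derivative of $f_e$ at $v$ in the direction pointing from $v$ into the edge $e$. $\mathbb{H}_1$ is the set of $f:\overline{\mathcal{G}}\to\mathbb{R}$ that are continuous on $\overline{\mathcal{G}}$, absolutely continuous on each edge, and have $f'\in L^2(\mathcal{G})$. *)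

theory Defs
  imports "HOL-Analysis.Analysis"
begin

text \<open>A metric graph is given by a vertex set V, an edge set E, endpoint maps
  src, tgt (edge e is identified with the interval [0, len e], src e at 0 and
  tgt e at len e) and lengths len. Loops and multiple edges are allowed.\<close>

datatype ('v, 'e) gpt = Vtx 'v | Ept 'e real

definition gdegree :: "'v set \<Rightarrow> 'e set \<Rightarrow> ('e \<Rightarrow> 'v) \<Rightarrow> ('e \<Rightarrow> 'v) \<Rightarrow> 'v \<Rightarrow> nat" where
  "gdegree V E src tgt v = card {e\<in>E. src e = v} + card {e\<in>E. tgt e = v}"

inductive walk :: "'e set \<Rightarrow> ('e \<Rightarrow> 'v) \<Rightarrow> ('e \<Rightarrow> 'v) \<Rightarrow> 'v \<Rightarrow> 'e list \<Rightarrow> 'v \<Rightarrow> bool"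
  for E src tgt where
  walk_nil: "walk E src tgt u [] u"
| walk_fwd: "e \<in> E \<Longrightarrow> src e = u \<Longrightarrow> walk E src tgt (tgt e) es w \<Longrightarrow> walk E src tgt u (e # es) w"
| walk_bwd: "e \<in> E \<Longrightarrow> tgt e = u \<Longrightarrow> walk E src tgt (src e) es w \<Longrightarrow> walk E src tgt u (e # es) w"

definition metric_graph ::
  "'v set \<Rightarrow> 'e set \<Rightarrow> ('e \<Rightarrow> 'v) \<Rightarrow> ('e \<Rightarrow> 'v) \<Rightarrow> ('e \<Rightarrow> real) \<Rightarrow> bool" where
  "metric_graph V E src tgt len \<longleftrightarrow>
     V \<noteq> {} \<and> countable V \<and> countable E \<and>
     (\<forall>e\<in>E. src e \<in> V \<and> tgt e \<in> V \<and> len e > 0) \<and>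
     (\<forall>v\<in>V. finite {e\<in>E. src e = v \<or> tgt e = v}) \<and>
     (\<forall>u\<in>V. \<forall>w\<in>V. \<exists>es. walk E src tgt u es w)"

definition gpoints :: "'v set \<Rightarrow> 'e set \<Rightarrow> ('e \<Rightarrow> real) \<Rightarrow> ('v, 'e) gpt set" where
  "gpoints V E len = Vtx ` V \<union> {Ept e t | e t. e \<in> E \<and> 0 < t \<and> t < len e}"

definition epos :: "('e \<Rightarrow> 'v) \<Rightarrow> ('e \<Rightarrow> 'v) \<Rightarrow> ('e \<Rightarrow> real) \<Rightarrow> 'e \<Rightarrow> real \<Rightarrow> ('v, 'e) gpt" where
  "epos src tgt len e t = (if t = 0 then Vtx (src e) else if t = len e then Vtx (tgt e) else Ept e t)"

definition vdist :: "'e set \<Rightarrow> ('e \<Rightarrow> 'v) \<Rightarrow> ('e \<Rightarrow> 'v) \<Rightarrow> ('e \<Rightarrow> real) \<Rightarrow> 'v \<Rightarrow> 'v \<Rightarrow> real" where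
  "vdist E src tgt len u w = Inf {sum_list (map len es) | es. walk E src tgt u es w}"

text \<open>Anchors of a point: the vertices through which it can be left, with the distance to them.\<close>
fun anchors :: "('e \<Rightarrow> 'v) \<Rightarrow> ('e \<Rightarrow> 'v) \<Rightarrow> ('e \<Rightarrow> real) \<Rightarrow> ('v, 'e) gpt \<Rightarrow> ('v \<times> real) set" where
  "anchors src tgt len (Vtx v) = {(v, 0)}"
| "anchors src tgt len (Ept e t) = {(src e, t), (tgt e, len e - t)}"

definition gdist :: "'e set \<Rightarrow> ('e \<Rightarrow> 'v) \<Rightarrow> ('e \<Rightarrow> 'v) \<Rightarrow> ('e \<Rightarrow> real) \<Rightarrow>
    ('v, 'e) gpt \<Rightarrow> ('v, 'e) gpt \<Rightarrow> real" where
  "gdist E src tgt len x y =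
    (let through = Inf {a + vdist E src tgt len u w + b | u a w b.
                          (u, a) \<in> anchors src tgt len x \<and> (w, b) \<in> anchors src tgt len y}
     in case (x, y) of
          (Ept e s, Ept e' t) \<Rightarrow> (if e = e' then min \<bar>s - t\<bar> through else through)
        | _ \<Rightarrow> through)"

definition is_completion ::
  "'v set \<Rightarrow> 'e set \<Rightarrow> ('e \<Rightarrow> 'v) \<Rightarrow> ('e \<Rightarrow> 'v) \<Rightarrow> ('e \<Rightarrow> real) \<Rightarrow>
   'x::metric_space set \<Rightarrow> (('v, 'e) gpt \<Rightarrow> 'x) \<Rightarrow> bool" where
  "is_completion V E src tgt len X \<iota> \<longleftrightarrow>
     complete X \<and> \<iota> ` gpoints V E len \<subseteq> X \<and> X \<subseteq> closure (\<iota> ` gpoints V E len) \<and>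
     (\<forall>x\<in>gpoints V E len. \<forall>y\<in>gpoints V E len. dist (\<iota> x) (\<iota> y) = gdist E src tgt len x y)"

definition totally_disconnected :: "'a::topological_space set \<Rightarrow> bool" where
  "totally_disconnected S \<longleftrightarrow> (\<forall>x\<in>S. connected_component_set S x = {x})"

definition cbdry ::
  "'v set \<Rightarrow> 'e set \<Rightarrow> ('e \<Rightarrow> real) \<Rightarrow> 'v set \<Rightarrow> 'x set \<Rightarrow> (('v, 'e) gpt \<Rightarrow> 'x) \<Rightarrow> 'x set" where
  "cbdry V E len B X \<iota> = X - \<iota> ` (gpoints V E len - Vtx ` B)"

text \<open>Harmonic: continuous on the completion, linear on each edge, Kirchhoff
  condition at every interior vertex (the derivative into the edge is the slope
  at the src end and minus the slope at the tgt end).\<close>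
definition harmonic ::
  "'v set \<Rightarrow> 'e set \<Rightarrow> ('e \<Rightarrow> 'v) \<Rightarrow> ('e \<Rightarrow> 'v) \<Rightarrow> ('e \<Rightarrow> real) \<Rightarrow> 'v set \<Rightarrow>
   'x::metric_space set \<Rightarrow> (('v, 'e) gpt \<Rightarrow> 'x) \<Rightarrow> ('x \<Rightarrow> real) \<Rightarrow> bool" where
  "harmonic V E src tgt len B X \<iota> f \<longleftrightarrow>
     continuous_on X f \<and>
     (\<forall>e\<in>E. \<exists>a b. \<forall>t\<in>{0..len e}. f (\<iota> (epos src tgt len e t)) = a + b * t) \<and>
     (\<forall>v\<in>V - B.
        (\<Sum>e\<in>{e\<in>E. src e = v}. (f (\<iota> (Vtx (tgt e))) - f (\<iota> (Vtx (src e)))) / len e)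
      + (\<Sum>e\<in>{e\<in>E. tgt e = v}. - ((f (\<iota> (Vtx (tgt e))) - f (\<iota> (Vtx (src e)))) / len e)) = 0)"

definition abs_cont_on :: "real \<Rightarrow> real \<Rightarrow> (real \<Rightarrow> real) \<Rightarrow> bool" where
  "abs_cont_on a b f \<longleftrightarrow>
    (\<forall>\<epsilon>>0. \<exists>\<delta>>0. \<forall>(n::nat) (l::nat \<Rightarrow> real) (r::nat \<Rightarrow> real).
       (\<forall>i<n. a \<le> l i \<and> l i \<le> r i \<and> r i \<le> b) \<and>
       (\<forall>i<n. \<forall>j<n. i \<noteq> j \<longrightarrow> r i \<le> l j \<or> r j \<le> l i) \<and>
       (\<Sum>i<n. r i - l i) < \<delta>
       \<longrightarrow> (\<Sum>i<n. \<bar>f (r i) - f (l i)\<bar>) < \<epsilon>)"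

definition H1 ::
  "'v set \<Rightarrow> 'e set \<Rightarrow> ('e \<Rightarrow> 'v) \<Rightarrow> ('e \<Rightarrow> 'v) \<Rightarrow> ('e \<Rightarrow> real) \<Rightarrow>
   'x::metric_space set \<Rightarrow> (('v, 'e) gpt \<Rightarrow> 'x) \<Rightarrow> ('x \<Rightarrow> real) \<Rightarrow> bool" where
  "H1 V E src tgt len X \<iota> f \<longleftrightarrow>
     continuous_on X f \<and>
     (\<forall>e\<in>E. abs_cont_on 0 (len e) (\<lambda>t. f (\<iota> (epos src tgt len e t)))) \<and>
     (\<exists>h :: 'e \<Rightarrow> real \<Rightarrow> real.
        (\<forall>e\<in>E. AE t in lebesgue. t \<in> {0<..<len e} \<longrightarrow>
                  ((\<lambda>s. f (\<iota> (epos src tgt len e s))) has_real_derivative h e t) (at t)) \<and>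
        (\<forall>e\<in>E. set_integrable lebesgue {0..len e} (\<lambda>t. (h e t)\<^sup>2)) \<and>
        (\<lambda>e. set_lebesgue_integral lebesgue {0..len e} (\<lambda>t. (h e t)\<^sup>2)) summable_on E)"

end

theory Submission
  imports Defs
begin

lemma edge_energy:
  fixes h :: "real \<Rightarrow> real" and \<phi> :: "real \<Rightarrow> real"
  assumes l: "l > 0" and lin: "\<forall>t\<in>{0..l}. \<phi> t = a + b*t"
    and der: "AE t in lebesgue. t \<in> {0<..<l} \<longrightarrow> (\<phi> has_real_derivative h t) (at t)"
    and int: "set_integrable lebesgue {0..l} (\<lambda>t. (h t)\<^sup>2)"
  shows "set_lebesgue_integral lebesgue {0..l} (\<lambda>t. (h t)\<^sup>2) = b\<^sup>2 * l"
proof -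
  have nn: "{0, l} \<in> null_sets lebesgue" by simp
  have ae: "AE t in lebesgue. t \<notin> {0, l}" by (rule AE_not_in[OF nn])
  have "AE t in lebesgue. indicator {0..l} t *\<^sub>R (h t)\<^sup>2 = indicator {0..l} t *\<^sub>R (b\<^sup>2 :: real)"
    using ae der
  proof eventually_elim
    case (elim t)
    show ?case
    proof (cases "t \<in> {0..l}")
      case True
      with elim have tin: "t \<in> {0<..<l}" by auto
      with elim have d: "(\<phi> has_real_derivative h t) (at t)" by auto
      have "((\<lambda>x. a + b * x) has_real_derivative h t) (at t)"
        by (rule has_field_derivative_transform_within_open[OF d, of "{0<..<l}"]) (use tin lin in auto)
      moreover have "((\<lambda>x. a + b * x) has_real_derivative b) (at t)"
        by (auto intro!: derivative_eq_intros)
      ultimately have "h t = b" by (rule DERIV_unique)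
      then show ?thesis by simp
    qed simp
  qed
  moreover have "(\<lambda>x. indicator {0..l} x *\<^sub>R (b\<^sup>2::real)) \<in> borel_measurable lebesgue"
    by (intro borel_measurable_scaleR borel_measurable_indicator) auto
  moreover have "(\<lambda>x. indicator {0..l} x *\<^sub>R (h x)\<^sup>2) \<in> borel_measurable lebesgue"
    using int unfolding set_integrable_def by (rule borel_measurable_integrable)
  ultimately have "set_lebesgue_integral lebesgue {0..l} (\<lambda>t. (h t)\<^sup>2) = set_lebesgue_integral lebesgue {0..l} (\<lambda>t. b\<^sup>2)"
    unfolding set_lebesgue_integral_def
    by (intro integral_cong_AE) auto
  also have "\<dots> = b\<^sup>2 * l"
    using l by (subst set_integral_const) auto
  finally show ?thesis .
qed

lemma amgm:
  fixes B c lam :: real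
  assumes "lam > 0" "c \<ge> 0"
  shows "\<bar>B\<bar> * c \<le> (lam * B\<^sup>2 * c + c / lam) / 2"
proof -
  have "0 \<le> c * (lam * \<bar>B\<bar> - 1)\<^sup>2" using assms by simp
  hence "2 * lam * (\<bar>B\<bar> * c) \<le> lam * (lam * B\<^sup>2 * c) + c"
    by (simp add: power2_eq_square algebra_simps)
  hence "\<bar>B\<bar> * c \<le> (lam * (lam * B\<^sup>2 * c) + c) / (2 * lam)"
    using assms by (simp add: field_simps)
  also have "\<dots> = (lam * B\<^sup>2 * c + c / lam) / 2"
    using assms by (simp add: field_simps)
  finally show ?thesis .
qed

lemma walk_edges: "walk E src tgt u es w \<Longrightarrow> set es \<subseteq> E"
  by (induction rule: walk.induct) auto

lemma walk_start: "walk E src tgt u es w \<Longrightarrow> u = w \<or> (\<exists>e\<in>set es. u = src e \<or> u = tgt e)"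
  by (induction rule: walk.induct) auto

lemma walk_bound:
  fixes f :: "'v \<Rightarrow> real"
  assumes "walk E src tgt u es w"
  shows "\<forall>z. (z = w \<or> (\<exists>e\<in>set es. z = src e \<or> z = tgt e)) \<longrightarrow>
           \<bar>f z - f w\<bar> \<le> (\<Sum>e\<in>set es. \<bar>f (tgt e) - f (src e)\<bar>)"
  using assms
proof (induction rule: walk.induct)
  case (walk_nil u)
  then show ?case by simp
next
  case (walk_fwd e u es w)
  let ?S = "\<lambda>A. (\<Sum>e\<in>A. \<bar>f (tgt e) - f (src e)\<bar>)"
  have mono: "?S (set es) \<le> ?S (set (e # es))"
    by (rule sum_mono2) auto
  have st: "tgt e = w \<or> (\<exists>e'\<in>set es. tgt e = src e' \<or> tgt e = tgt e')"
    using walk_start[OF walk_fwd(3)] by auto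
  show ?case
  proof (intro allI impI)
    fix z assume z: "z = w \<or> (\<exists>e'\<in>set (e # es). z = src e' \<or> z = tgt e')"
    show "\<bar>f z - f w\<bar> \<le> ?S (set (e # es))"
    proof (cases "z = w \<or> (\<exists>e'\<in>set es. z = src e' \<or> z = tgt e')")
      case True
      then show ?thesis using walk_fwd(4) mono by force
    next
      case False
      with z have zz: "z = src e \<or> z = tgt e" by auto
      have e1: "\<bar>f (tgt e) - f w\<bar> \<le> ?S (set es)" using walk_fwd(4) st by blast
      have ne: "e \<notin> set es" using False zz by auto
      have eq: "?S (set (e # es)) = \<bar>f (tgt e) - f (src e)\<bar> + ?S (set es)"
        using ne by simp
      show ?thesis
      proof (cases "z = tgt e")
        case True
        then have "f z = f (tgt e)" by simp
        then show ?thesis using e1 mono by linarith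
      next
        case False
        with zz have "f z = f (src e)" by simp
        then show ?thesis using e1 eq by linarith
      qed
    qed
  qed
next
  case (walk_bwd e u es w)
  let ?S = "\<lambda>A. (\<Sum>e\<in>A. \<bar>f (tgt e) - f (src e)\<bar>)"
  have mono: "?S (set es) \<le> ?S (set (e # es))"
    by (rule sum_mono2) auto
  have st: "src e = w \<or> (\<exists>e'\<in>set es. src e = src e' \<or> src e = tgt e')"
    using walk_start[OF walk_bwd(3)] by auto
  show ?case
  proof (intro allI impI)
    fix z assume z: "z = w \<or> (\<exists>e'\<in>set (e # es). z = src e' \<or> z = tgt e')"
    show "\<bar>f z - f w\<bar> \<le> ?S (set (e # es))"
    proof (cases "z = w \<or> (\<exists>e'\<in>set es. z = src e' \<or> z = tgt e')")
      case True
      then show ?thesis using walk_bwd(4) mono by force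
    next
      case False
      with z have zz: "z = src e \<or> z = tgt e" by auto
      have e1: "\<bar>f (src e) - f w\<bar> \<le> ?S (set es)" using walk_bwd(4) st by blast
      have ne: "e \<notin> set es" using False zz by auto
      have eq: "?S (set (e # es)) = \<bar>f (tgt e) - f (src e)\<bar> + ?S (set es)"
        using ne by simp
      show ?thesis
      proof (cases "z = src e")
        case True
        then have "f z = f (src e)" by simp
        then show ?thesis using e1 mono by linarith
      next
        case False
        with zz have "f z = f (tgt e)" by simp
        then show ?thesis using e1 eq by linarith
      qed
    qed
  qed
qed

lemma sum_set_le_sum_list:
  fixes f :: "'a \<Rightarrow> real"
  assumes "\<forall>x\<in>set xs. f x \<ge> 0"
  shows "sum f (set xs) \<le> sum_list (map f xs)"
  using assms
proof (induction xs)
  case Nil then show ?case by simp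
next
  case (Cons x xs)
  show ?case
  proof (cases "x \<in> set xs")
    case True
    then have "set (x # xs) = set xs" by auto
    moreover have "f x \<ge> 0" using Cons.prems by simp
    ultimately show ?thesis using Cons by simp
  next
    case False
    then show ?thesis using Cons by simp
  qed
qed

lemma energy_bound:
  fixes V :: "'v set" and E :: "'e set" and src tgt :: "'e \<Rightarrow> 'v" and len :: "'e \<Rightarrow> real"
    and B :: "'v set" and X :: "'x::metric_space set" and \<iota> :: "('v, 'e) gpt \<Rightarrow> 'x"
  assumes G: "metric_graph V E src tgt len"
    and compl: "is_completion V E src tgt len X \<iota>"
    and hg: "harmonic V E src tgt len B X \<iota> g"
    and h1: "H1 V E src tgt len X \<iota> g"
  shows "\<exists>D\<ge>0. \<forall>p\<in>X. \<forall>q\<in>X. \<forall>lam>0. \<bar>g p - g q\<bar> \<le> (3*lam*D + dist p q/lam)/2"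
proof -
  from hg have "\<forall>e\<in>E. \<exists>a b. \<forall>t\<in>{0..len e}. g (\<iota> (epos src tgt len e t)) = a + b*t"
    by (simp add: harmonic_def)
  then obtain A Bc where lin: "\<forall>e\<in>E. \<forall>t\<in>{0..len e}. g (\<iota> (epos src tgt len e t)) = A e + Bc e * t"
    by metis
  from h1 obtain h :: "'e \<Rightarrow> real \<Rightarrow> real" where
    hder: "\<forall>e\<in>E. AE t in lebesgue. t \<in> {0<..<len e} \<longrightarrow>
                  ((\<lambda>s. g (\<iota> (epos src tgt len e s))) has_real_derivative h e t) (at t)"
    and hint: "\<forall>e\<in>E. set_integrable lebesgue {0..len e} (\<lambda>t. (h e t)\<^sup>2)"
    and hsum: "(\<lambda>e. set_lebesgue_integral lebesgue {0..len e} (\<lambda>t. (h e t)\<^sup>2)) summable_on E"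
    unfolding H1_def by blast
  define De where "De e = set_lebesgue_integral lebesgue {0..len e} (\<lambda>t. (h e t)\<^sup>2)" for e
  have lenpos: "\<forall>e\<in>E. len e > 0" and srcV: "\<forall>e\<in>E. src e \<in> V \<and> tgt e \<in> V"
    using G by (auto simp: metric_graph_def)
  have conn: "\<forall>u\<in>V. \<forall>w\<in>V. \<exists>es. walk E src tgt u es w"
    using G by (simp add: metric_graph_def)
  have De_eq: "De e = (Bc e)\<^sup>2 * len e" if "e \<in> E" for e
    unfolding De_def
    by (rule edge_energy[of "len e" "\<lambda>t. g (\<iota> (epos src tgt len e t))" "A e" "Bc e" "h e"])
       (use lin hder hint lenpos that in auto)
  define D where "D = infsum De E"
  have Dnn: "De e \<ge> 0" if "e \<in> E" for e using De_eq[OF that] lenpos that by (simp add: less_imp_le)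
  have sumD: "De summable_on E" using hsum unfolding De_def .
  have D0: "D \<ge> 0" unfolding D_def by (rule infsum_nonneg) (use Dnn in auto)
  have finD: "sum De S \<le> D" if "finite S" "S \<subseteq> E" for S
  proof -
    have "infsum De S \<le> infsum De E"
      by (rule infsum_mono_neutral) (use that sumD Dnn in auto)
    then show ?thesis using that by (simp add: D_def)
  qed
  have DeD: "De e \<le> D" if "e \<in> E" for e using finD[of "{e}"] that by simp
  define gv where "gv v = g (\<iota> (Vtx v))" for v
  have gsrc: "gv (src e) = A e" if "e \<in> E" for e
    using lin that lenpos by (force simp: gv_def epos_def)
  have gtgt: "gv (tgt e) = A e + Bc e * len e" if "e \<in> E" for e
  proof -
    have "len e \<in> {0..len e}" "len e \<noteq> 0" using lenpos that by auto
    then show ?thesis using lin that by (force simp: gv_def epos_def)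
  qed
  have gmid: "g (\<iota> (Ept e t)) = A e + Bc e * t" if "e \<in> E" "0 < t" "t < len e" for e t
  proof -
    have "t \<in> {0..len e}" "t \<noteq> 0" "t \<noteq> len e" using that by auto
    moreover have "epos src tgt len e t = Ept e t" using that by (simp add: epos_def)
    ultimately show ?thesis using lin that by metis
  qed

  have edgeb: "\<bar>gv (tgt e) - gv (src e)\<bar> \<le> (lam * De e + len e / lam) / 2" if "e \<in> E" "lam > 0" for e lam
  proof -
    have "\<bar>gv (tgt e) - gv (src e)\<bar> = \<bar>Bc e\<bar> * len e"
      using gsrc gtgt that lenpos by (simp add: abs_mult less_imp_le)
    also have "\<dots> \<le> (lam * (Bc e)\<^sup>2 * len e + len e / lam) / 2"
      by (rule amgm) (use that lenpos in auto)
    finally show ?thesis using De_eq[OF that(1)] by (simp add: mult.assoc)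
  qed
  have walkb: "\<bar>gv u - gv w\<bar> \<le> (lam * D + sum_list (map len es) / lam) / 2"
    if wk: "walk E src tgt u es w" and lam: "lam > 0" for u es w lam
  proof -
    have sub: "set es \<subseteq> E" by (rule walk_edges[OF wk])
    have "\<bar>gv u - gv w\<bar> \<le> (\<Sum>e\<in>set es. \<bar>gv (tgt e) - gv (src e)\<bar>)"
      using walk_bound[OF wk, of gv] walk_start[OF wk] by blast
    also have "\<dots> \<le> (\<Sum>e\<in>set es. (lam * De e + len e / lam) / 2)"
      by (rule sum_mono) (use edgeb sub lam in auto)
    also have "\<dots> = (lam * sum De (set es) + sum len (set es) / lam) / 2"
      by (simp add: sum_divide_distrib sum.distrib sum_distrib_left add_divide_distrib)
    also have "\<dots> \<le> (lam * D + sum_list (map len es) / lam) / 2"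
    proof -
      have "sum De (set es) \<le> D" using finD sub by simp
      moreover have "sum len (set es) \<le> sum_list (map len es)"
        by (rule sum_set_le_sum_list) (use sub lenpos in force)
      ultimately show ?thesis using lam
        by (intro divide_right_mono add_mono mult_left_mono) auto
    qed
    finally show ?thesis .
  qed
  have vb: "\<bar>gv u - gv w\<bar> \<le> (lam * D + vdist E src tgt len u w / lam) / 2"
    if "u \<in> V" "w \<in> V" "lam > 0" for u w lam
  proof -
    let ?W = "{sum_list (map len es) | es. walk E src tgt u es w}"
    have ne: "?W \<noteq> {}" using conn that by auto
    have "lam * (2 * \<bar>gv u - gv w\<bar> - lam * D) \<le> Inf ?W"
    proof (rule cInf_greatest[OF ne])
      fix L assume "L \<in> ?W"
      then obtain es where wk: "walk E src tgt u es w" and L: "L = sum_list (map len es)" by auto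
      have "\<bar>gv u - gv w\<bar> \<le> (lam * D + L / lam) / 2" using walkb[OF wk that(3)] L by simp
      then have "2 * \<bar>gv u - gv w\<bar> - lam * D \<le> L / lam" by simp
      then show "lam * (2 * \<bar>gv u - gv w\<bar> - lam * D) \<le> L"
        using that(3) by (simp add: field_simps)
    qed
    then have "2 * \<bar>gv u - gv w\<bar> - lam * D \<le> Inf ?W / lam"
      using that(3) by (simp add: field_simps)
    then show ?thesis unfolding vdist_def by simp
  qed

  have segb: "\<bar>Bc e\<bar> * c \<le> (lam * D + c / lam) / 2" if "e \<in> E" "0 \<le> c" "c \<le> len e" "lam > 0" for e c lam
  proof -
    have "\<bar>Bc e\<bar> * c \<le> (lam * (Bc e)\<^sup>2 * c + c / lam) / 2" by (rule amgm) (use that in auto)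
    moreover have "(Bc e)\<^sup>2 * c \<le> (Bc e)\<^sup>2 * len e" using that by (simp add: mult_left_mono)
    then have "lam * (Bc e)\<^sup>2 * c \<le> lam * D" using De_eq[OF that(1)] DeD[OF that(1)] that(4)
      by (simp add: mult.assoc)
    then have "(lam * (Bc e)\<^sup>2 * c + c / lam) / 2 \<le> (lam * D + c / lam) / 2" by simp
    ultimately show ?thesis by (rule order.trans)
  qed
  have gpts: "(\<exists>v. x = Vtx v \<and> v \<in> V) \<or> (\<exists>e t. x = Ept e t \<and> e \<in> E \<and> 0 < t \<and> t < len e)"
    if "x \<in> gpoints V E len" for x
    using that unfolding gpoints_def by auto
  have anch: "u \<in> V \<and> 0 \<le> a \<and> \<bar>g (\<iota> x) - gv u\<bar> \<le> (lam * D + a / lam) / 2"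
    if x: "x \<in> gpoints V E len" and ua: "(u, a) \<in> anchors src tgt len x" and lam: "lam > 0" for x u a lam
  proof (cases "\<exists>v. x = Vtx v \<and> v \<in> V")
    case True
    then obtain v where v: "x = Vtx v" "v \<in> V" by auto
    then show ?thesis using ua D0 lam by (simp add: gv_def)
  next
    case False
    then obtain e t where et: "x = Ept e t" "e \<in> E" "0 < t" "t < len e" using gpts[OF x] by blast
    from ua et have "(u, a) = (src e, t) \<or> (u, a) = (tgt e, len e - t)" by auto
    then show ?thesis
    proof
      assume "(u, a) = (src e, t)"
      then have ua': "u = src e" "a = t" by auto
      have "\<bar>g (\<iota> x) - gv u\<bar> = \<bar>Bc e\<bar> * t"
        using gmid[OF et(2-4)] gsrc[OF et(2)] et ua' by (simp add: abs_mult)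
      also have "\<dots> \<le> (lam * D + t / lam) / 2" by (rule segb) (use et lam in auto)
      finally show ?thesis using ua' srcV et by auto
    next
      assume "(u, a) = (tgt e, len e - t)"
      then have ua': "u = tgt e" "a = len e - t" by auto
      have "g (\<iota> x) - gv u = - (Bc e * (len e - t))"
        using gmid[OF et(2-4)] gtgt[OF et(2)] et ua' by (simp add: algebra_simps)
      then have "\<bar>g (\<iota> x) - gv u\<bar> = \<bar>Bc e\<bar> * (len e - t)"
        using et by (simp add: abs_mult)
      also have "\<dots> \<le> (lam * D + (len e - t) / lam) / 2" by (rule segb) (use et lam in auto)
      finally show ?thesis using ua' srcV et by auto
    qed
  qed

  have thr: "\<bar>g (\<iota> x) - g (\<iota> y)\<bar> \<le> (3 * lam * D + Inf {a + vdist E src tgt len u w + b | u a w b.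
                          (u, a) \<in> anchors src tgt len x \<and> (w, b) \<in> anchors src tgt len y} / lam) / 2"
    if x: "x \<in> gpoints V E len" and y: "y \<in> gpoints V E len" and lam: "lam > 0" for x y lam
  proof -
    let ?T = "{a + vdist E src tgt len u w + b | u a w b.
                          (u, a) \<in> anchors src tgt len x \<and> (w, b) \<in> anchors src tgt len y}"
    have nx: "anchors src tgt len x \<noteq> {}" by (cases x) auto
    have ny: "anchors src tgt len y \<noteq> {}" by (cases y) auto
    have ne: "?T \<noteq> {}" using nx ny by fast
    have "lam * (2 * \<bar>g (\<iota> x) - g (\<iota> y)\<bar> - 3 * lam * D) \<le> Inf ?T"
    proof (rule cInf_greatest[OF ne])
      fix L assume "L \<in> ?T"
      then obtain u a w b where L: "L = a + vdist E src tgt len u w + b"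
        and ua: "(u, a) \<in> anchors src tgt len x" and wb: "(w, b) \<in> anchors src tgt len y" by blast
      have a1: "u \<in> V" "\<bar>g (\<iota> x) - gv u\<bar> \<le> (lam * D + a / lam) / 2" using anch[OF x ua lam] by auto
      have b1: "w \<in> V" "\<bar>g (\<iota> y) - gv w\<bar> \<le> (lam * D + b / lam) / 2" using anch[OF y wb lam] by auto
      have m: "\<bar>gv u - gv w\<bar> \<le> (lam * D + vdist E src tgt len u w / lam) / 2" by (rule vb[OF a1(1) b1(1) lam])
      have "\<bar>g (\<iota> x) - g (\<iota> y)\<bar> \<le> \<bar>g (\<iota> x) - gv u\<bar> + \<bar>gv u - gv w\<bar> + \<bar>g (\<iota> y) - gv w\<bar>" by linarith
      also have "\<dots> \<le> (lam * D + a / lam) / 2 + (lam * D + vdist E src tgt len u w / lam) / 2 + (lam * D + b / lam) / 2"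
        using a1 b1 m by linarith
      also have "\<dots> = (3 * lam * D + L / lam) / 2" unfolding L using lam by (simp add: field_simps)
      finally have "2 * \<bar>g (\<iota> x) - g (\<iota> y)\<bar> - 3 * lam * D \<le> L / lam" by simp
      then show "lam * (2 * \<bar>g (\<iota> x) - g (\<iota> y)\<bar> - 3 * lam * D) \<le> L"
        using lam by (simp add: field_simps)
    qed
    then have "2 * \<bar>g (\<iota> x) - g (\<iota> y)\<bar> - 3 * lam * D \<le> Inf ?T / lam"
      using lam by (simp add: field_simps)
    then show ?thesis by simp
  qed
  have gb: "\<bar>g (\<iota> x) - g (\<iota> y)\<bar> \<le> (3 * lam * D + gdist E src tgt len x y / lam) / 2"
    if x: "x \<in> gpoints V E len" and y: "y \<in> gpoints V E len" and lam: "lam > 0" for x y lam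
  proof -
    let ?I = "Inf {a + vdist E src tgt len u w + b | u a w b.
                          (u, a) \<in> anchors src tgt len x \<and> (w, b) \<in> anchors src tgt len y}"
    have c: "gdist E src tgt len x y = ?I \<or>
        (\<exists>e s t. x = Ept e s \<and> y = Ept e t \<and> gdist E src tgt len x y = \<bar>s - t\<bar>)"
      unfolding gdist_def Let_def by (cases x; cases y) (auto simp: min_def)
    then show ?thesis
    proof
      assume "gdist E src tgt len x y = ?I"
      then show ?thesis using thr[OF x y lam] by simp
    next
      assume "\<exists>e s t. x = Ept e s \<and> y = Ept e t \<and> gdist E src tgt len x y = \<bar>s - t\<bar>"
      then obtain e s t where est: "x = Ept e s" "y = Ept e t" "gdist E src tgt len x y = \<bar>s - t\<bar>" by blast
      have xs: "e \<in> E" "0 < s" "s < len e" using gpts[OF x] est by auto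
      have yt: "0 < t" "t < len e" using gpts[OF y] est by auto
      have "g (\<iota> x) - g (\<iota> y) = Bc e * (s - t)"
        using gmid[OF xs] gmid[OF xs(1) yt] est by (simp add: algebra_simps)
      then have "\<bar>g (\<iota> x) - g (\<iota> y)\<bar> = \<bar>Bc e\<bar> * \<bar>s - t\<bar>" by (simp add: abs_mult)
      also have "\<dots> \<le> (lam * D + \<bar>s - t\<bar> / lam) / 2" by (rule segb) (use xs yt lam in auto)
      also have "\<dots> \<le> (3 * lam * D + \<bar>s - t\<bar> / lam) / 2" using D0 lam by simp
      finally show ?thesis using est by simp
    qed
  qed

  have isom: "\<forall>x\<in>gpoints V E len. \<forall>y\<in>gpoints V E len. dist (\<iota> x) (\<iota> y) = gdist E src tgt len x y"
    and sub: "\<iota> ` gpoints V E len \<subseteq> X" and dense: "X \<subseteq> closure (\<iota> ` gpoints V E len)"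
    using compl by (auto simp: is_completion_def)
  have cont: "continuous_on X g" using hg by (simp add: harmonic_def)
  have gb2: "\<bar>g x' - g y'\<bar> \<le> (3 * lam * D + dist x' y' / lam) / 2"
    if "x' \<in> \<iota> ` gpoints V E len" "y' \<in> \<iota> ` gpoints V E len" "lam > 0" for x' y' lam
    using that gb isom by auto
  have "\<forall>p\<in>X. \<forall>q\<in>X. \<forall>lam>0. \<bar>g p - g q\<bar> \<le> (3*lam*D + dist p q/lam)/2"
  proof (intro ballI allI impI)
    fix p q and lam :: real assume p: "p \<in> X" and q: "q \<in> X" and lam: "lam > 0"
    obtain xs where xs: "\<forall>n. xs n \<in> \<iota> ` gpoints V E len" "xs \<longlonglongrightarrow> p"
      using dense p closure_sequential by blast
    obtain ys where ys: "\<forall>n. ys n \<in> \<iota> ` gpoints V E len" "ys \<longlonglongrightarrow> q"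
      using dense q closure_sequential by blast
    have gx: "(\<lambda>n. g (xs n)) \<longlonglongrightarrow> g p"
      using continuous_on_tendsto_compose[OF cont xs(2) p, unfolded o_def] xs(1) sub
      by (metis (mono_tags, lifting) always_eventually subsetD)
    have gy: "(\<lambda>n. g (ys n)) \<longlonglongrightarrow> g q"
      using continuous_on_tendsto_compose[OF cont ys(2) q, unfolded o_def] ys(1) sub
      by (metis (mono_tags, lifting) always_eventually subsetD)
    have l1: "(\<lambda>n. \<bar>g (xs n) - g (ys n)\<bar>) \<longlonglongrightarrow> \<bar>g p - g q\<bar>"
      by (intro tendsto_intros gx gy)
    have l2: "(\<lambda>n. (3 * lam * D + dist (xs n) (ys n) / lam) / 2) \<longlonglongrightarrow> (3*lam*D + dist p q/lam)/2"
      by (intro tendsto_intros xs(2) ys(2)) (use lam in auto)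
    show "\<bar>g p - g q\<bar> \<le> (3*lam*D + dist p q/lam)/2"
      by (rule LIMSEQ_le[OF l1 l2]) (use gb2 xs ys lam in auto)
  qed
  then show ?thesis using D0 by blast
qed

theorem proposition3p7:
  fixes V :: "'v set" and E :: "'e set" and src tgt :: "'e \<Rightarrow> 'v" and len :: "'e \<Rightarrow> real"
    and B :: "'v set" and X :: "'x::metric_space set" and \<iota> :: "('v, 'e) gpt \<Rightarrow> 'x"
  assumes G: "metric_graph V E src tgt len"
    and B: "B \<subseteq> V" "\<forall>v\<in>V. gdegree V E src tgt v = 1 \<longrightarrow> v \<in> B"
    and compl: "is_completion V E src tgt len X \<iota>"
    and cpt: "compact X"
    and td: "totally_disconnected (cbdry V E len B X \<iota>)"
    and nonisol: "\<exists>p\<in>cbdry V E len B X \<iota>. p islimpt cbdry V E len B X \<iota>"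
  shows "\<exists>F :: 'x \<Rightarrow> real. continuous_on (cbdry V E len B X \<iota>) F \<and>
           \<not> (\<exists>g. harmonic V E src tgt len B X \<iota> g \<and>
                  (\<forall>p\<in>cbdry V E len B X \<iota>. g p = F p) \<and>
                  H1 V E src tgt len X \<iota> g)"
proof -
  let ?C = "cbdry V E len B X \<iota>"
  obtain p0 where p0: "p0 \<in> ?C" "p0 islimpt ?C" using nonisol by blast
  have CX: "?C \<subseteq> X" by (auto simp: cbdry_def)
  define F where "F x = sqrt (sqrt (dist x p0))" for x
  have Fc: "continuous_on ?C F" unfolding F_def by (intro continuous_intros)
  have "\<not> (\<exists>g. harmonic V E src tgt len B X \<iota> g \<and> (\<forall>p\<in>?C. g p = F p) \<and> H1 V E src tgt len X \<iota> g)"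
  proof
    assume "\<exists>g. harmonic V E src tgt len B X \<iota> g \<and> (\<forall>p\<in>?C. g p = F p) \<and> H1 V E src tgt len X \<iota> g"
    then obtain g where hg: "harmonic V E src tgt len B X \<iota> g" and gF: "\<forall>p\<in>?C. g p = F p"
      and h1: "H1 V E src tgt len X \<iota> g" by blast
    obtain D where D0: "D \<ge> 0" and bd: "\<forall>p\<in>X. \<forall>q\<in>X. \<forall>lam>0. \<bar>g p - g q\<bar> \<le> (3*lam*D + dist p q/lam)/2"
      using energy_bound[OF G compl hg h1] by blast
    define c where "c = 1 / (3 * D + 1)"
    have c0: "c > 0" using D0 by (simp add: c_def)
    have "c ^ 4 > 0" using c0 by simp
    then obtain q where q: "q \<in> ?C" "q \<noteq> p0" "dist q p0 < c ^ 4"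
      using p0(2) islimpt_approachable by blast
    define r where "r = dist q p0"
    have r0: "r > 0" using q by (simp add: r_def)
    define s where "s = sqrt (sqrt r)"
    have s0: "s > 0" using r0 by (simp add: s_def)
    have ss: "s\<^sup>2 = sqrt r" using r0 by (simp add: s_def)
    have rs: "r = s ^ 4"
    proof -
      have "s ^ 4 = (s\<^sup>2)\<^sup>2" by simp
      also have "\<dots> = r" using ss r0 by simp
      finally show ?thesis by simp
    qed
    have sc: "s < c"
    proof -
      have "s ^ 4 < c ^ 4" using q(3) rs r_def by simp
      then show ?thesis using s0 c0 power_less_imp_less_base by (metis less_imp_le)
    qed
    have "\<bar>g q - g p0\<bar> \<le> (3 * s\<^sup>2 * D + dist q p0 / s\<^sup>2) / 2"
    proof -
      have "q \<in> X" "p0 \<in> X" using q(1) p0(1) CX by auto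
      moreover have "s\<^sup>2 > 0" using s0 by simp
      ultimately show ?thesis using bd by blast
    qed
    moreover have "g q = s" "g p0 = 0" using gF q(1) p0(1) by (auto simp: F_def s_def r_def)
    moreover have "dist q p0 / s\<^sup>2 = s\<^sup>2"
      using s0 rs r_def by (simp add: power2_eq_square power4_eq_xxxx)
    ultimately have "s \<le> (3 * s\<^sup>2 * D + s\<^sup>2) / 2" using s0 by simp
    then have "2 * s \<le> s * (s * (3 * D + 1))" by (simp add: power2_eq_square algebra_simps)
    then have "2 \<le> s * (3 * D + 1)" using s0 by simp
    moreover have "s * (3 * D + 1) < 1" using sc D0 by (simp add: c_def field_simps)
    ultimately show False by simp
  qed
  then show ?thesis using Fc by blast
qed

end
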